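(* Let $\{M_i(t_i),t_i\ge0\}$, $i=1,\dots,d$, be independent one-parameter integrable processes, let $\mathcal{F}^{(i)}(t_i)=\sigma(M_i(s_i):s_i\le t_i)$ and $\mathcal{F}(\mathbf{t})=\bigvee_{i=1}^d\mathcal{F}^{(i)}(t_i)$ for $\mathbf{t}=(t_1,\dots,t_d)\in\mathbb{R}^d_+$. The following are equivalent: (i) $\{\sum_{i=1}^dM_i(t_i),\mathbf{t}\in\mathbb{R}^d_+\}$ is a $d$-parameter $\{\mathcal{F}(\mathbf{t})\}$-martingale and, for each $i$, $\mathbb{E}M_i(s_i)=\mathbb{E}M_i(t_i)$ for all $s_i,t_i\ge0$; (ii) for every $1\le d'\le d$, $\{\sum_{i=1}^{d'}M_i(t_i),(t_1,\dots,t_{d'})\in\mathbb{R}^{d'}_+\}$ is a $d'$-parameter martingale with respect to $\mathcal{F}'(t_1,\dots,t_{d'})=\bigvee_{i=1}^{d'}\mathcal{F}^{(i)}(t_i)$; (iii) for each $i=1,\dots,d$, $\{M_i(t_i),t_i\ge0\}$ is a one-parameter martingale with respect to its natural filtration.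
   Context: $\mathbb{R}^d_+$ carries the componentwise order $\preceq$. A $d$-parameter filtration is a family $\{\mathcal{F}(\mathbf{t})\}$ of complete sub-$\sigma$-fields with $\mathcal{F}(\mathbf{s})\subseteq\mathcal{F}(\mathbf{t})$ for $\mathbf{s}\preceq\mathbf{t}$. A $d$-parameter martingale is an integrable adapted process $M(\mathbf{t})$ with $\mathbb{E}(M(\mathbf{t})\mid\mathcal{F}(\mathbf{s}))=M(\mathbf{s})$ a.s. whenever $\mathbf{s}\preceq\mathbf{t}$. *)

theory Defs
  imports "HOL-Probability.Probability"
begin

definition nat_filt :: "'a measure \<Rightarrow> (nat \<Rightarrow> real \<Rightarrow> 'a \<Rightarrow> real) \<Rightarrow> nat \<Rightarrow> real \<Rightarrow> 'a measure" where
  "nat_filt P X i t = sigma (space P)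
     {X i s -` B \<inter> space P | s B. 0 \<le> s \<and> s \<le> t \<and> B \<in> sets borel}"

definition join_filt :: "'a measure \<Rightarrow> (nat \<Rightarrow> real \<Rightarrow> 'a \<Rightarrow> real) \<Rightarrow> nat set \<Rightarrow> (nat \<Rightarrow> real) \<Rightarrow> 'a measure" where
  "join_filt P X I t = sigma (space P) (\<Union>i\<in>I. sets (nat_filt P X i (t i)))"

definition param_martingale :: "'a measure \<Rightarrow> 'i set \<Rightarrow> (('i \<Rightarrow> real) \<Rightarrow> 'a measure)
    \<Rightarrow> (('i \<Rightarrow> real) \<Rightarrow> 'a \<Rightarrow> real) \<Rightarrow> bool" where
  "param_martingale P I F Y \<longleftrightarrow>
     (\<forall>t. (\<forall>i\<in>I. 0 \<le> t i) \<longrightarrow>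
        subalgebra P (F t) \<and> integrable P (Y t) \<and> Y t \<in> borel_measurable (F t)) \<and>
     (\<forall>s t. (\<forall>i\<in>I. 0 \<le> s i \<and> s i \<le> t i) \<longrightarrow>
        (AE \<omega> in P. real_cond_exp P (F s) (Y t) \<omega> = Y s \<omega>))"

definition martingale1 :: "'a measure \<Rightarrow> (real \<Rightarrow> 'a measure) \<Rightarrow> (real \<Rightarrow> 'a \<Rightarrow> real) \<Rightarrow> bool" where
  "martingale1 P F Y \<longleftrightarrow>
     (\<forall>t\<ge>0. subalgebra P (F t) \<and> integrable P (Y t) \<and> Y t \<in> borel_measurable (F t)) \<and>
     (\<forall>s t. 0 \<le> s \<and> s \<le> t \<longrightarrow> (AE \<omega> in P. real_cond_exp P (F s) (Y t) \<omega> = Y s \<omega>))"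

end

theory Submission
  imports Defs
begin


lemma sigma_sets_le:
  assumes "A \<subseteq> sigma_sets \<Omega> B"
  shows "sigma_sets \<Omega> A \<subseteq> sigma_sets \<Omega> B"
proof
  fix x assume "x \<in> sigma_sets \<Omega> A"
  then show "x \<in> sigma_sets \<Omega> B"
    by induct (use assms in \<open>auto intro: sigma_sets.intros\<close>)
qed

lemma meas_mono:
  assumes "space N = space N'" "sets N \<subseteq> sets N'" "f \<in> borel_measurable N"
  shows "f \<in> borel_measurable N'"
  using assms unfolding measurable_def by auto

lemma sfs:
  assumes "prob_space P" "subalgebra P G"
  shows "sigma_finite_subalgebra P G"
proof -
  interpret prob_space P by fact
  interpret finite_measure_subalgebra P G
    by unfold_locales (rule assms(2))
  show ?thesis ..
qed

lemma nf_space: "space (nat_filt P X i t) = space P"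
  unfolding nat_filt_def by (rule space_measure_of_conv)

lemma nf_sets: "sets (nat_filt P X i t) = sigma_sets (space P)
     {X i s -` B \<inter> space P | s B. 0 \<le> s \<and> s \<le> t \<and> B \<in> sets borel}"
  unfolding nat_filt_def by (rule sets_measure_of) auto

lemma jf_space: "space (join_filt P X I t) = space P"
  unfolding join_filt_def by (rule space_measure_of_conv)

lemma jf_sets: "sets (join_filt P X I t) = sigma_sets (space P) (\<Union>i\<in>I. sets (nat_filt P X i (t i)))"
proof -
  have "sets (nat_filt P X i s) \<subseteq> Pow (space P)" for i s
    using sets.space_closed[of "nat_filt P X i s"] by (simp add: nf_space)
  then show ?thesis
    unfolding join_filt_def by (intro sets_measure_of) blast
qed

lemma nf_mono: "s \<le> t \<Longrightarrow> sets (nat_filt P X i s) \<subseteq> sets (nat_filt P X i t)"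
  unfolding nf_sets by (rule sigma_sets_subseteq) force

lemma jf_contains: "i \<in> I \<Longrightarrow> sets (nat_filt P X i (t i)) \<subseteq> sets (join_filt P X I t)"
  unfolding jf_sets using nf_sets[of P X i "t i"] by (auto intro: sigma_sets.Basic)

context prob_space
begin

lemma nf_sub:
  assumes integ: "\<And>i t. i < d \<Longrightarrow> 0 \<le> t \<Longrightarrow> integrable M (X i t)" and "i < d"
  shows "subalgebra M (nat_filt M X i t)"
  unfolding subalgebra_def nf_space nf_sets
proof (intro conjI refl sets.sigma_sets_subset subsetI)
  fix x assume "x \<in> {X i s -` B \<inter> space M |s B. 0 \<le> s \<and> s \<le> t \<and> B \<in> sets borel}"
  then obtain s B where "x = X i s -` B \<inter> space M" "0 \<le> s" "B \<in> sets borel" by blast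
  moreover have "X i s \<in> borel_measurable M" using integ[OF \<open>i < d\<close> \<open>0 \<le> s\<close>] by auto
  ultimately show "x \<in> events" by (auto intro: measurable_sets)
qed

lemma nf_meas:
  assumes "0 \<le> t"
  shows "X i t \<in> borel_measurable (nat_filt M X i t)"
  unfolding measurable_def nf_space
proof (intro CollectI conjI ballI)
  fix B :: "real set" assume "B \<in> sets borel"
  then show "X i t -` B \<inter> space M \<in> sets (nat_filt M X i t)"
    unfolding nf_sets using assms by (intro sigma_sets.Basic) blast
qed auto

lemma jf_sub:
  assumes integ: "\<And>i t. i < d \<Longrightarrow> 0 \<le> t \<Longrightarrow> integrable M (X i t)" and "I \<subseteq> {..<d}"
  shows "subalgebra M (join_filt M X I t)"
  unfolding subalgebra_def jf_space jf_sets
proof (intro conjI refl sets.sigma_sets_subset)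
  show "(\<Union>i\<in>I. sets (nat_filt M X i (t i))) \<subseteq> events"
    using nf_sub[OF integ] assms(2) by (force simp: subalgebra_def)
qed

lemma indep_nf:
  fixes X :: "nat \<Rightarrow> real \<Rightarrow> 'a \<Rightarrow> real"
  assumes indep: "indep_vars (\<lambda>i. Pi\<^sub>M {0..} (\<lambda>_. borel))
                  (\<lambda>i \<omega>. restrict (\<lambda>t. X i t \<omega>) {0..}) {..<d}"
    and "j < d'" "d' \<le> d"
  shows "indep_set (sets (nat_filt M X j T)) (sets (join_filt M X ({..<d'} - {j}) s))"
proof -
  define R where "R i \<omega> = restrict (\<lambda>t. X i t \<omega>) {0::real..}" for i \<omega>
  define V where "V i = {R i -` A \<inter> space M | A. A \<in> sets (Pi\<^sub>M {0::real..} (\<lambda>_. borel :: real measure))}" for i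
  define I where "I = case_bool {j} ({..<d'} - {j})"
  have iV: "indep_sets V {..<d}" using indep unfolding indep_vars_def2 V_def R_def by auto
  have stV: "Int_stable (V i)" for i
    unfolding V_def Int_stable_def
    apply auto
    apply (rule_tac x="A \<inter> Aa" in exI)
    apply auto
    done
  have "indep_sets (\<lambda>b. sigma_sets (space M) (\<Union>i\<in>I b. V i)) UNIV"
  proof (rule indep_sets_collect_sigma[where E=V and I=I and J=UNIV])
    show "indep_sets V (\<Union>b\<in>UNIV. I b)"
      by (rule indep_sets_mono_index[OF _ iV]) (use assms in \<open>auto simp: I_def UNIV_bool\<close>)
    show "disjoint_family_on I UNIV"
      by (auto simp: disjoint_family_on_def I_def UNIV_bool)
  qed (simp add: stV)
  then have ind2: "indep_sets (case_bool (sigma_sets (space M) (V j))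
                  (sigma_sets (space M) (\<Union>i\<in>{..<d'} - {j}. V i))) UNIV"
    by (rule indep_sets_mono_sets) (auto simp: I_def split: bool.split)
  have nfV: "sets (nat_filt M X i T') \<subseteq> sigma_sets (space M) (V i)" for i T'
    unfolding nf_sets
  proof (rule sigma_sets_subseteq, safe)
    fix s B assume s: "0 \<le> s" "s \<le> T'" and B: "B \<in> sets (borel :: real measure)"
    let ?A = "(\<lambda>f. f s) -` B \<inter> space (Pi\<^sub>M {0::real..} (\<lambda>_. borel :: real measure))"
    have "?A \<in> sets (Pi\<^sub>M {0::real..} (\<lambda>_. borel :: real measure))"
      using s B by (intro measurable_sets[OF measurable_component_singleton]) auto
    moreover have "X i s -` B \<inter> space M = R i -` ?A \<inter> space M"
      using s by (auto simp: R_def space_PiM)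
    ultimately show "X i s -` B \<inter> space M \<in> V i" unfolding V_def by blast
  qed
  have sub: "sets (nat_filt M X i (s i)) \<subseteq> sigma_sets (space M) (\<Union>i\<in>{..<d'} - {j}. V i)"
    if "i \<in> {..<d'} - {j}" for i
  proof -
    have "sigma_sets (space M) (V i) \<subseteq> sigma_sets (space M) (\<Union>i\<in>{..<d'} - {j}. V i)"
      using that by (intro sigma_sets_subseteq) auto
    then show ?thesis using nfV[of i "s i"] by blast
  qed
  have "sets (join_filt M X ({..<d'} - {j}) s) \<subseteq> sigma_sets (space M) (\<Union>i\<in>{..<d'} - {j}. V i)"
    unfolding jf_sets by (rule sigma_sets_le) (use sub in blast)
  then show ?thesis
    unfolding indep_set_def
    by (intro indep_sets_mono_sets[OF ind2]) (use nfV in \<open>auto split: bool.split\<close>)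
qed

lemma (in prob_space) indep_var_of_sets:
  assumes subA: "subalgebra M A" and subH: "subalgebra M H"
    and ind: "indep_set (sets A) (sets H)"
    and u: "u \<in> borel_measurable A" and v: "v \<in> borel_measurable H"
  shows "indep_var borel u borel v"
proof -
  have spA: "space A = space M" and spH: "space H = space M"
    using subA subH by (auto simp: subalgebra_def)
  have "{u -` B \<inter> space M | B. B \<in> sets borel} \<subseteq> sets A"
    using measurable_sets[OF u] spA by auto
  moreover have "space M \<in> sets A" using sets.top[of A] spA by simp
  ultimately have su: "sigma_sets (space M) {u -` B \<inter> space M | B. B \<in> sets borel} \<subseteq> sets A"
    by (rule sets.sigma_sets_subset')
  have "{v -` B \<inter> space M | B. B \<in> sets borel} \<subseteq> sets H"
    using measurable_sets[OF v] spH by auto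
  moreover have "space M \<in> sets H" using sets.top[of H] spH by simp
  ultimately have sv: "sigma_sets (space M) {v -` B \<inter> space M | B. B \<in> sets borel} \<subseteq> sets H"
    by (rule sets.sigma_sets_subset')
  have ru: "random_variable borel u" using measurable_from_subalg[OF subA u] .
  have rv: "random_variable borel v" using measurable_from_subalg[OF subH v] .
  have "indep_set (sigma_sets (space M) {u -` B \<inter> space M | B. B \<in> sets borel})
                   (sigma_sets (space M) {v -` B \<inter> space M | B. B \<in> sets borel})"
    unfolding indep_set_def
  proof (rule indep_sets_mono_sets[OF ind[unfolded indep_set_def]])
    fix i :: bool
    show "(case i of True \<Rightarrow> sigma_sets (space M) {u -` B \<inter> space M | B. B \<in> sets borel}
              | False \<Rightarrow> sigma_sets (space M) {v -` B \<inter> space M | B. B \<in> sets borel})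
          \<subseteq> (case i of True \<Rightarrow> sets A | False \<Rightarrow> sets H)"
      using su sv by (cases i) auto
  qed
  then show ?thesis unfolding indep_var_eq using ru rv by simp
qed

lemma (in prob_space) key_dynkin:
  fixes h :: "'a \<Rightarrow> real"
  assumes subA: "subalgebra M A" and subH: "subalgebra M H" and subF: "subalgebra M F"
    and FA: "sets F \<subseteq> sets A"
    and ind: "indep_set (sets A) (sets H)"
    and hint: "integrable M h" and hA: "h \<in> borel_measurable A"
    and hF: "\<And>a. a \<in> sets F \<Longrightarrow> (LINT x:a|M. h x) = 0"
    and C: "C \<in> sigma_sets (space M) {a \<inter> b | a b. a \<in> sets F \<and> b \<in> sets H}"
  shows "(LINT x:C|M. h x) = 0"
proof -
  let ?K = "{a \<inter> b | a b. a \<in> sets F \<and> b \<in> sets H}"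
  have spF: "space F = space M" and spH: "space H = space M" and spA: "space A = space M"
    using subA subH subF by (auto simp: subalgebra_def)
  have FM: "sets F \<subseteq> sets M" and HM: "sets H \<subseteq> sets M"
    using subH subF by (auto simp: subalgebra_def)
  have KM: "?K \<subseteq> sets M" using FM HM by blast
  have stable: "Int_stable ?K"
  proof (rule Int_stableI)
    fix x y assume "x \<in> ?K" "y \<in> ?K"
    then obtain a b a' b' where "x = a \<inter> b" "y = a' \<inter> b'" "a \<in> sets F" "b \<in> sets H" "a' \<in> sets F" "b' \<in> sets H"
      by blast
    then show "x \<inter> y \<in> ?K"
      by (intro CollectI exI[of _ "a \<inter> a'"] exI[of _ "b \<inter> b'"]) auto
  qed
  have closed: "?K \<subseteq> Pow (space M)" using KM sets.sets_into_space by blast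
  have sigM: "sigma_sets (space M) ?K \<subseteq> sets M"
    using KM by (rule sets.sigma_sets_subset)
  have sint: "set_integrable M S h" if "S \<in> sets M" for S
    unfolding set_integrable_def using integrable_mult_indicator[OF that hint] .
  have basicK: "(LINT x:c|M. h x) = 0" if "c \<in> ?K" for c
  proof -
    obtain a b where c: "c = a \<inter> b" and a: "a \<in> sets F" and b: "b \<in> sets H" using \<open>c \<in> ?K\<close> by blast
    have aA: "a \<in> sets A" using a FA by blast
    have aM: "a \<in> sets M" using a FM by blast
    have bM: "b \<in> sets M" using b HM by blast
    have u: "(\<lambda>x. indicator a x * h x) \<in> borel_measurable A"
      using aA hA by measurable
    have v: "(indicator b :: 'a \<Rightarrow> real) \<in> borel_measurable H"
      using b by measurable
    have iv: "indep_var borel (\<lambda>x. indicator a x * h x) borel (indicator b :: 'a \<Rightarrow> real)"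
      by (rule indep_var_of_sets[OF subA subH ind u v])
    have i1: "integrable M (\<lambda>x. indicator a x * h x)"
      using integrable_mult_indicator[OF aM hint] by simp
    have i2: "integrable M (indicator b :: 'a \<Rightarrow> real)"
      using bM by (simp add: emeasure_space_1 less_top[symmetric] integrable_indicator_iff)
    have "(LINT x:c|M. h x) = (\<integral>x. (indicator a x * h x) * indicator b x \<partial>M)"
      unfolding set_lebesgue_integral_def c
      by (simp add: indicator_inter_arith ac_simps)
    also have "\<dots> = (\<integral>x. indicator a x * h x \<partial>M) * (\<integral>x. indicator b x \<partial>M)"
      by (rule indep_var_lebesgue_integral[OF iv i1 i2])
    also have "(\<integral>x. indicator a x * h x \<partial>M) = (LINT x:a|M. h x)"
      unfolding set_lebesgue_integral_def by simp
    also have "\<dots> = 0" using hF[OF a] .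
    finally show ?thesis by simp
  qed
  have spK: "space M \<in> ?K"
    using sets.top[of F] sets.top[of H] spF spH by blast
  show ?thesis
    using stable closed C
  proof (induct rule: sigma_sets_induct_disjoint)
    case (basic S) then show ?case by (rule basicK)
  next
    case empty then show ?case by (simp add: set_lebesgue_integral_def)
  next
    case (compl S)
    have SM: "S \<in> sets M" using compl(1) sigM by blast
    have "(LINT x:space M|M. h x) = (LINT x:S \<union> (space M - S)|M. h x)"
      using sets.sets_into_space[OF SM] by (simp add: Un_absorb1 Un_Diff_cancel)
    also have "\<dots> = (LINT x:S|M. h x) + (LINT x:(space M - S)|M. h x)"
      by (rule set_integral_Un) (auto intro!: sint SM)
    finally show ?case using basicK[OF spK] compl(2) by simp
  next
    case (union S)
    have SM: "\<And>i. S i \<in> sets M" using union(2) sigM by blast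
    have "(LINT x:(\<Union>i. S i)|M. h x) = (\<Sum>i. (LINT x:(S i)|M. h x))"
      by (rule lebesgue_integral_countable_add)
        (auto intro!: SM sint simp: union(1)[unfolded disjoint_family_on_def])
    then show ?case using union(3) by simp
  qed
qed



lemma set_int_AE:
  fixes f g :: "'a \<Rightarrow> real"
  assumes "AE x in M. f x = g x" "f \<in> borel_measurable M" "g \<in> borel_measurable M" "A \<in> sets M"
  shows "(LINT x:A|M. f x) = (LINT x:A|M. g x)"
  unfolding set_lebesgue_integral_def
proof (rule integral_cong_AE)
  show "(\<lambda>x. indicat_real A x *\<^sub>R f x) \<in> borel_measurable M"
    using assms by measurable
  show "(\<lambda>x. indicat_real A x *\<^sub>R g x) \<in> borel_measurable M"
    using assms by measurable
  show "AE x in M. indicat_real A x *\<^sub>R f x = indicat_real A x *\<^sub>R g x"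
    using assms(1) by (auto elim!: eventually_mono)
qed

lemma sint_of: "integrable M f \<Longrightarrow> A \<in> sets M \<Longrightarrow> set_integrable M A (f :: 'a \<Rightarrow> real)"
  unfolding set_integrable_def by (rule integrable_mult_indicator)

lemma A_to_C:
  fixes X :: "nat \<Rightarrow> real \<Rightarrow> 'a \<Rightarrow> real"
  assumes integ: "\<And>i t. i < d \<Longrightarrow> 0 \<le> t \<Longrightarrow> integrable M (X i t)"
    and je: "j < e" "e \<le> d"
    and pm: "param_martingale M {..<e} (join_filt M X {..<e}) (\<lambda>t \<omega>. \<Sum>i<e. X i (t i) \<omega>)"
  shows "martingale1 M (nat_filt M X j) (X j)"
  unfolding martingale1_def
proof (intro conjI allI impI)
  fix t :: real assume "0 \<le> t"
  show "subalgebra M (nat_filt M X j t)" using nf_sub[OF integ] je by auto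
  show "integrable M (X j t)" using integ je \<open>0 \<le> t\<close> by auto
  show "X j t \<in> borel_measurable (nat_filt M X j t)" by (rule nf_meas[OF \<open>0 \<le> t\<close>])
next
  fix s t :: real assume st: "0 \<le> s \<and> s \<le> t"
  define u where "u = (\<lambda>i::nat. s)"
  define v where "v = u(j := t)"
  define G where "G = join_filt M X {..<e} u"
  define F where "F = nat_filt M X j s"
  have jd: "j < d" using je by auto
  have "AE \<omega> in M. real_cond_exp M G (\<lambda>\<omega>. \<Sum>i<e. X i (v i) \<omega>) \<omega> = (\<Sum>i<e. X i (u i) \<omega>)"
    using pm st unfolding param_martingale_def G_def by (auto simp: u_def v_def)
  note ae = this
  have subG: "subalgebra M G" unfolding G_def by (rule jf_sub[OF integ]) (use je in auto)
  have subF: "subalgebra M F" unfolding F_def by (rule nf_sub[OF integ jd])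
  have FG: "sets F \<subseteq> sets G" unfolding F_def G_def using jf_contains[of j "{..<e}" M X u] je
    by (auto simp: u_def)
  interpret G: sigma_finite_subalgebra M G by (rule sfs[OF prob_space_axioms subG])
  interpret F: sigma_finite_subalgebra M F by (rule sfs[OF prob_space_axioms subF])
  have iX: "integrable M (X i r)" if "i < e" "0 \<le> r" for i r using integ that je by auto
  have iv: "integrable M (\<lambda>\<omega>. \<Sum>i<e. X i (v i) \<omega>)"
    using st by (intro Bochner_Integration.integrable_sum) (auto simp: v_def u_def intro!: iX)
  have iu: "integrable M (\<lambda>\<omega>. \<Sum>i<e. X i (u i) \<omega>)"
    using st by (intro Bochner_Integration.integrable_sum) (auto simp: u_def intro!: iX)
  have diff: "(\<Sum>i<e. X i (v i) x) - (\<Sum>i<e. X i (u i) x) = X j t x - X j s x" for x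
  proof -
    have "(\<Sum>i<e. X i (v i) x) = X j t x + (\<Sum>i\<in>{..<e} - {j}. X i (v i) x)"
      using je by (subst sum.remove[of _ j]) (auto simp: v_def)
    moreover have "(\<Sum>i<e. X i (u i) x) = X j s x + (\<Sum>i\<in>{..<e} - {j}. X i (u i) x)"
      using je by (subst sum.remove[of _ j]) (auto simp: u_def)
    moreover have "(\<Sum>i\<in>{..<e} - {j}. X i (v i) x) = (\<Sum>i\<in>{..<e} - {j}. X i (u i) x)"
      by (rule sum.cong) (auto simp: v_def)
    ultimately show ?thesis by simp
  qed
  show "AE \<omega> in M. real_cond_exp M (nat_filt M X j s) (X j t) \<omega> = X j s \<omega>"
    unfolding F_def[symmetric]
  proof (rule F.real_cond_exp_charact)
    fix A assume AF: "A \<in> sets F"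
    have AG: "A \<in> sets G" using AF FG by blast
    have AM: "A \<in> sets M" using AF subF by (auto simp: subalgebra_def)
    have "(LINT x:A|M. (\<Sum>i<e. X i (v i) x)) = (LINT x:A|M. real_cond_exp M G (\<lambda>\<omega>. \<Sum>i<e. X i (v i) \<omega>) x)"
      by (rule G.real_cond_exp_intA[OF iv AG])
    also have "\<dots> = (LINT x:A|M. (\<Sum>i<e. X i (u i) x))"
      by (rule set_int_AE[OF ae _ _ AM]) (use iu in auto)
    finally have eq: "(LINT x:A|M. (\<Sum>i<e. X i (v i) x)) - (LINT x:A|M. (\<Sum>i<e. X i (u i) x)) = 0"
      by simp
    have "(LINT x:A|M. X j t x - X j s x) = 0"
      using eq set_integral_diff(2)[OF sint_of[OF iv AM] sint_of[OF iu AM]] by (simp add: diff)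
    then show "(LINT x:A|M. X j t x) = (LINT x:A|M. X j s x)"
      using set_integral_diff(2)[OF sint_of[OF iX AM] sint_of[OF iX AM], of j t j s] je st by simp
  next
    show "integrable M (X j t)" "integrable M (X j s)" using iX je st by auto
    show "X j s \<in> borel_measurable F" unfolding F_def by (rule nf_meas) (use st in auto)
  qed
qed




lemma C_to_B:
  fixes X :: "nat \<Rightarrow> real \<Rightarrow> 'a \<Rightarrow> real"
  assumes integ: "\<And>i t. i < d \<Longrightarrow> 0 \<le> t \<Longrightarrow> integrable M (X i t)"
    and indep: "indep_vars (\<lambda>i. Pi\<^sub>M {0..} (\<lambda>_. borel))
                  (\<lambda>i \<omega>. restrict (\<lambda>t. X i t \<omega>) {0..}) {..<d}"
    and mart: "\<forall>i<d. martingale1 M (nat_filt M X i) (X i)"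
    and e: "e \<le> d"
  shows "param_martingale M {..<e} (join_filt M X {..<e}) (\<lambda>t \<omega>. \<Sum>i<e. X i (t i) \<omega>)"
  unfolding param_martingale_def
proof (intro conjI allI impI)
  fix t :: "nat \<Rightarrow> real" assume t: "\<forall>i\<in>{..<e}. 0 \<le> t i"
  show "subalgebra M (join_filt M X {..<e} t)" by (rule jf_sub[OF integ]) (use e in auto)
  show "integrable M (\<lambda>\<omega>. \<Sum>i<e. X i (t i) \<omega>)"
    using t e by (intro Bochner_Integration.integrable_sum) (auto intro!: integ)
  show "(\<lambda>\<omega>. \<Sum>i<e. X i (t i) \<omega>) \<in> borel_measurable (join_filt M X {..<e} t)"
  proof (rule borel_measurable_sum)
    fix i assume i: "i \<in> {..<e}"
    show "X i (t i) \<in> borel_measurable (join_filt M X {..<e} t)"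
      by (rule meas_mono[OF _ jf_contains[OF i] nf_meas]) (use t i in \<open>auto simp: nf_space jf_space\<close>)
  qed
next
  fix s t :: "nat \<Rightarrow> real" assume st: "\<forall>i\<in>{..<e}. 0 \<le> s i \<and> s i \<le> t i"
  define G where "G = join_filt M X {..<e} s"
  have subG: "subalgebra M G" unfolding G_def by (rule jf_sub[OF integ]) (use e in auto)
  interpret G: sigma_finite_subalgebra M G by (rule sfs[OF prob_space_axioms subG])
  have iX: "integrable M (X i r)" if "i < e" "0 \<le> r" for i r using integ that e by auto
  have it: "integrable M (\<lambda>\<omega>. \<Sum>i<e. X i (t i) \<omega>)"
  proof (rule Bochner_Integration.integrable_sum)
    fix i assume "i \<in> {..<e}"
    then show "integrable M (X i (t i))" using st iX by (meson lessThan_iff order_trans)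
  qed
  have is': "integrable M (\<lambda>\<omega>. \<Sum>i<e. X i (s i) \<omega>)"
  proof (rule Bochner_Integration.integrable_sum)
    fix i assume "i \<in> {..<e}"
    then show "integrable M (X i (s i))" using st iX by (meson lessThan_iff)
  qed
  have per: "(LINT x:C|M. X j (t j) x - X j (s j) x) = 0" if C: "C \<in> sets G" and j: "j < e" for C j
  proof -
    define A where "A = nat_filt M X j (t j)"
    define F where "F = nat_filt M X j (s j)"
    define H where "H = join_filt M X ({..<e} - {j}) s"
    have jd: "j < d" using j e by auto
    have s0: "0 \<le> s j" "s j \<le> t j" using st j by auto
    have subA: "subalgebra M A" unfolding A_def by (rule nf_sub[OF integ jd])
    have subF: "subalgebra M F" unfolding F_def by (rule nf_sub[OF integ jd])
    have subH: "subalgebra M H" unfolding H_def by (rule jf_sub[OF integ]) (use e in auto)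
    interpret F: sigma_finite_subalgebra M F by (rule sfs[OF prob_space_axioms subF])
    have FA: "sets F \<subseteq> sets A" unfolding F_def A_def by (rule nf_mono) (rule s0(2))
    have ind: "indep_set (sets A) (sets H)" unfolding A_def H_def
      by (rule indep_nf[OF indep j e])
    have hA: "(\<lambda>x. X j (t j) x - X j (s j) x) \<in> borel_measurable A"
    proof -
      have "X j (t j) \<in> borel_measurable A" unfolding A_def by (rule nf_meas) (use s0 in auto)
      moreover have "X j (s j) \<in> borel_measurable A"
        by (rule meas_mono[OF _ FA]) (use s0 in \<open>auto simp: F_def A_def nf_space intro: nf_meas\<close>)
      ultimately show ?thesis by measurable
    qed
    have hint: "integrable M (\<lambda>x. X j (t j) x - X j (s j) x)"
      using s0 j by (intro Bochner_Integration.integrable_diff iX) auto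
    have ae: "AE \<omega> in M. real_cond_exp M F (X j (t j)) \<omega> = X j (s j) \<omega>"
      using mart jd s0 unfolding martingale1_def F_def by auto
    have hF: "(LINT x:a|M. X j (t j) x - X j (s j) x) = 0" if a: "a \<in> sets F" for a
    proof -
      have aM: "a \<in> sets M" using a subF by (auto simp: subalgebra_def)
      have "(LINT x:a|M. X j (t j) x) = (LINT x:a|M. real_cond_exp M F (X j (t j)) x)"
        by (rule F.real_cond_exp_intA[OF iX[OF j] a]) (use s0 in auto)
      also have "\<dots> = (LINT x:a|M. X j (s j) x)"
        by (rule set_int_AE[OF ae _ _ aM]) (use iX[OF j, of "s j"] s0 in auto)
      finally show ?thesis
        using set_integral_diff(2)[OF sint_of[OF iX[OF j] aM] sint_of[OF iX[OF j] aM], of "t j" "s j"] s0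
        by simp
    qed
    have CK: "C \<in> sigma_sets (space M) {a \<inter> b | a b. a \<in> sets F \<and> b \<in> sets H}"
    proof -
      have gen: "x \<in> {a \<inter> b | a b. a \<in> sets F \<and> b \<in> sets H}"
        if i: "i \<in> {..<e}" and x: "x \<in> sets (nat_filt M X i (s i))" for i x
      proof (cases "i = j")
        case True
        have "x \<subseteq> space M" using sets.sets_into_space[OF x] by (simp add: nf_space)
        moreover have "space M \<in> sets H" using sets.top[of H] by (simp add: H_def jf_space)
        ultimately have "x = x \<inter> space M" "space M \<in> sets H" by blast+
        then show ?thesis using x True unfolding F_def by blast
      next
        case False
        have "x \<subseteq> space M" using sets.sets_into_space[OF x] by (simp add: nf_space)
        moreover have "space M \<in> sets F" using sets.top[of F] by (simp add: F_def nf_space)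
        moreover have "x \<in> sets H" using jf_contains[of i "{..<e} - {j}" M X s] x i False
          by (auto simp: H_def)
        ultimately have "x = space M \<inter> x" "space M \<in> sets F" "x \<in> sets H" by blast+
        then show ?thesis by blast
      qed
      have "sets G \<subseteq> sigma_sets (space M) {a \<inter> b | a b. a \<in> sets F \<and> b \<in> sets H}"
        unfolding G_def jf_sets by (rule sigma_sets_le) (use gen in \<open>blast intro: sigma_sets.Basic\<close>)
      then show ?thesis using C by blast
    qed
    show ?thesis
      by (rule key_dynkin[OF subA subH subF FA ind hint hA hF CK])
  qed
  show "AE \<omega> in M. real_cond_exp M (join_filt M X {..<e} s) (\<lambda>\<omega>. \<Sum>i<e. X i (t i) \<omega>) \<omega> = (\<Sum>i<e. X i (s i) \<omega>)"
    unfolding G_def[symmetric]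
  proof (rule G.real_cond_exp_charact[OF _ it is'])
    fix C assume C: "C \<in> sets G"
    have CM: "C \<in> sets M" using C subG by (auto simp: subalgebra_def)
    have ij: "integrable M (\<lambda>x. indicator C x * (X j (t j) x - X j (s j) x))" if "j \<in> {..<e}" for j
    proof -
      have j': "j < e" "0 \<le> s j" "0 \<le> t j" using that st by (auto dest!: bspec[of _ _ j])
      have "integrable M (\<lambda>x. X j (t j) x - X j (s j) x)"
        using iX[OF j'(1) j'(2)] iX[OF j'(1) j'(3)] by (rule Bochner_Integration.integrable_diff[rotated])
      from integrable_mult_indicator[OF CM this] show ?thesis by simp
    qed
    have "(LINT x:C|M. (\<Sum>i<e. X i (t i) x)) - (LINT x:C|M. (\<Sum>i<e. X i (s i) x))
        = (LINT x:C|M. (\<Sum>i<e. X i (t i) x) - (\<Sum>i<e. X i (s i) x))"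
      by (rule set_integral_diff(2)[symmetric]) (auto intro!: sint_of it is' CM)
    also have "\<dots> = (\<integral>x. (\<Sum>j<e. indicator C x * (X j (t j) x - X j (s j) x)) \<partial>M)"
      unfolding set_lebesgue_integral_def
      by (simp add: sum_distrib_left sum_subtractf right_diff_distrib)
    also have "\<dots> = (\<Sum>j<e. (\<integral>x. indicator C x * (X j (t j) x - X j (s j) x) \<partial>M))"
      by (rule Bochner_Integration.integral_sum) (rule ij)
    also have "\<dots> = (\<Sum>j<e. (LINT x:C|M. X j (t j) x - X j (s j) x))"
      unfolding set_lebesgue_integral_def by simp
    also have "\<dots> = 0" using per[OF C] by simp
    finally show "(LINT x:C|M. (\<Sum>i<e. X i (t i) x)) = (LINT x:C|M. (\<Sum>i<e. X i (s i) x))" by simp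
  next
    show "(\<lambda>\<omega>. \<Sum>i<e. X i (s i) \<omega>) \<in> borel_measurable G"
    proof (rule borel_measurable_sum)
      fix i assume i: "i \<in> {..<e}"
      show "X i (s i) \<in> borel_measurable G" unfolding G_def
        by (rule meas_mono[OF _ jf_contains[OF i] nf_meas]) (use st i in \<open>auto simp: nf_space jf_space\<close>)
    qed
  qed
qed


end

theorem mainTheorem14:
  fixes P :: "'a measure" and X :: "nat \<Rightarrow> real \<Rightarrow> 'a \<Rightarrow> real" and d :: nat
  assumes "prob_space P"
    and "d \<ge> 1"
    and integ: "\<And>i t. i < d \<Longrightarrow> 0 \<le> t \<Longrightarrow> integrable P (X i t)"
    and indep: "prob_space.indep_vars P (\<lambda>i. Pi\<^sub>M {0..} (\<lambda>_. borel))
                  (\<lambda>i \<omega>. restrict (\<lambda>t. X i t \<omega>) {0..}) {..<d}"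
  shows "((param_martingale P {..<d} (join_filt P X {..<d}) (\<lambda>t \<omega>. \<Sum>i<d. X i (t i) \<omega>)
            \<and> (\<forall>i<d. \<forall>s t. 0 \<le> s \<and> 0 \<le> t \<longrightarrow>
                 prob_space.expectation P (X i s) = prob_space.expectation P (X i t)))
          \<longleftrightarrow>
          (\<forall>d'. 1 \<le> d' \<and> d' \<le> d \<longrightarrow>
             param_martingale P {..<d'} (join_filt P X {..<d'}) (\<lambda>t \<omega>. \<Sum>i<d'. X i (t i) \<omega>)))
       \<and>
         ((\<forall>d'. 1 \<le> d' \<and> d' \<le> d \<longrightarrow>
             param_martingale P {..<d'} (join_filt P X {..<d'}) (\<lambda>t \<omega>. \<Sum>i<d'. X i (t i) \<omega>))
          \<longleftrightarrow>
          (\<forall>i<d. martingale1 P (nat_filt P X i) (X i)))"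
proof -
  interpret prob_space P by fact
  have AC: "\<forall>i<d. martingale1 P (nat_filt P X i) (X i)"
    if "param_martingale P {..<d} (join_filt P X {..<d}) (\<lambda>t \<omega>. \<Sum>i<d. X i (t i) \<omega>)"
    using A_to_C[OF integ _ _ that] by auto
  have CB: "\<forall>d'. 1 \<le> d' \<and> d' \<le> d \<longrightarrow>
             param_martingale P {..<d'} (join_filt P X {..<d'}) (\<lambda>t \<omega>. \<Sum>i<d'. X i (t i) \<omega>)"
    if "\<forall>i<d. martingale1 P (nat_filt P X i) (X i)"
    using C_to_B[OF integ indep that] by auto
  have CE: "\<forall>i<d. \<forall>s t. 0 \<le> s \<and> 0 \<le> t \<longrightarrow> expectation (X i s) = expectation (X i t)"
    if mart: "\<forall>i<d. martingale1 P (nat_filt P X i) (X i)"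
  proof (intro allI impI)
    fix i :: nat and s t :: real assume i: "i < d" and st: "0 \<le> s \<and> 0 \<le> t"
    have E0: "expectation (X i r) = expectation (X i 0)" if r: "0 \<le> r" for r
    proof -
      have subF: "subalgebra P (nat_filt P X i 0)" by (rule nf_sub[OF integ i])
      interpret F: sigma_finite_subalgebra P "nat_filt P X i 0" by (rule sfs[OF prob_space_axioms subF])
      have ae: "AE \<omega> in P. real_cond_exp P (nat_filt P X i 0) (X i r) \<omega> = X i 0 \<omega>"
        using mart i r unfolding martingale1_def by auto
      have "expectation (X i r) = expectation (real_cond_exp P (nat_filt P X i 0) (X i r))"
        by (rule F.real_cond_exp_int(2)[symmetric]) (rule integ[OF i r])
      also have "\<dots> = expectation (X i 0)"
        by (rule integral_cong_AE[OF _ _ ae]) (use integ[OF i, of 0] in auto)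
      finally show ?thesis .
    qed
    have a: "expectation (X i s) = expectation (X i 0)" using st by (intro E0) auto
    have b: "expectation (X i t) = expectation (X i 0)" using st by (intro E0) auto
    show "expectation (X i s) = expectation (X i t)" unfolding a b ..
  qed
  show ?thesis using AC CB CE assms(2) by blast
qed

end
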